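(* Let $G=D\rtimes M$ be a finite soluble group such that: (i) $D$ is an abelian Hall subgroup of $G$ of odd order and $M$ is a $\sigma$-nilpotent $M$-group; (ii) every element of $G$ induces a power automorphism on $D$; (iii) for every $i$, $O_{\sigma_i}(D)$ has a normal complement in a Hall $\sigma_i$-subgroup of $G$. If $A$ is a $\sigma$-primary $\sigma$-subnormal subgroup of $G$ with $A\le M$, then $D\le C_G(A)$.
   Context: $\sigma=\{\sigma_i\mid i\in I\}$ is a partition of the set of all primes. A group is $\sigma$-primary if it is a $\sigma_i$-group for some $i$, and $\sigma$-nilpotent if it is a direct product of $\sigma$-primary groups. A Hall $\sigma_i$-subgroup is a $\sigma_i$-subgroup whose index involves no prime of $\sigma_i$; $O_{\sigma_i}(D)$ is the largest normal $\sigma_i$-subgroup of $D$. $A_G$ is the core of $A$ in $G$. $A$ is $\sigma$-subnormal in $G$ if there is a chain $A=A_0\le\cdots\le A_n=G$ with, for each $i$, $A_{i-1}\trianglelefteq A_i$ or $A_i/(A_{i-1})_{A_i}$ $\sigma$-primary. An $M$-group is a group whose subgroup lattice is modular. A power automorphism is an automorphism mapping every subgroup to itself. *)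

theory Defs
  imports "HOL-Algebra.Algebra" "HOL-Computational_Algebra.Primes"
begin

definition sigma_partition :: "nat set set \<Rightarrow> bool" where
  "sigma_partition Sig \<longleftrightarrow>
     (\<forall>s\<in>Sig. s \<noteq> {}) \<and> \<Union>Sig = {p. Factorial_Ring.prime (p::nat)} \<and>
     (\<forall>s\<in>Sig. \<forall>t\<in>Sig. s \<noteq> t \<longrightarrow> s \<inter> t = {})"

definition pi_set :: "nat set \<Rightarrow> 'a set \<Rightarrow> bool" where
  "pi_set \<pi> H \<longleftrightarrow> (\<forall>p. Factorial_Ring.prime (p::nat) \<longrightarrow> p dvd card H \<longrightarrow> p \<in> \<pi>)"

definition sigma_primary :: "nat set set \<Rightarrow> 'a set \<Rightarrow> bool" where
  "sigma_primary Sig H \<longleftrightarrow> (\<exists>s\<in>Sig. pi_set s H)"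

definition sigma_nilpotent :: "('a, 'b) monoid_scheme \<Rightarrow> nat set set \<Rightarrow> 'a set \<Rightarrow> bool" where
  "sigma_nilpotent G Sig M \<longleftrightarrow>
     (\<exists>Hs. finite Hs \<and>
        (\<forall>H\<in>Hs. normal H (G\<lparr>carrier := M\<rparr>) \<and> sigma_primary Sig H) \<and>
        generate G (\<Union>Hs) = M \<and>
        (\<forall>H\<in>Hs. H \<inter> generate G (\<Union>(Hs - {H})) = {\<one>\<^bsub>G\<^esub>}))"

definition modular_subgroup_lattice :: "('a, 'b) monoid_scheme \<Rightarrow> 'a set \<Rightarrow> bool" where
  "modular_subgroup_lattice G M \<longleftrightarrow>
     (\<forall>U V W. subgroup U G \<and> subgroup V G \<and> subgroup W G \<and> U \<subseteq> M \<and> V \<subseteq> M \<and> W \<subseteq> M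
        \<and> U \<subseteq> W \<longrightarrow> generate G (U \<union> V) \<inter> W = generate G (U \<union> (V \<inter> W)))"

definition hall_pi_subgroup :: "('a, 'b) monoid_scheme \<Rightarrow> nat set \<Rightarrow> 'a set \<Rightarrow> bool" where
  "hall_pi_subgroup G \<pi> H \<longleftrightarrow> subgroup H G \<and> pi_set \<pi> H \<and>
     (\<forall>p. Factorial_Ring.prime (p::nat) \<longrightarrow> p dvd (card (carrier G) div card H) \<longrightarrow> p \<notin> \<pi>)"

definition hall_subgroup :: "('a, 'b) monoid_scheme \<Rightarrow> 'a set \<Rightarrow> bool" where
  "hall_subgroup G H \<longleftrightarrow> subgroup H G \<and> coprime (card H) (card (carrier G) div card H)"

definition is_O_pi :: "('a, 'b) monoid_scheme \<Rightarrow> nat set \<Rightarrow> 'a set \<Rightarrow> 'a set \<Rightarrow> bool" where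
  "is_O_pi G \<pi> D Op \<longleftrightarrow> normal Op (G\<lparr>carrier := D\<rparr>) \<and> pi_set \<pi> Op \<and>
     (\<forall>K. normal K (G\<lparr>carrier := D\<rparr>) \<and> pi_set \<pi> K \<longrightarrow> K \<subseteq> Op)"

definition core_in :: "('a, 'b) monoid_scheme \<Rightarrow> 'a set \<Rightarrow> 'a set \<Rightarrow> 'a set" where
  "core_in G B A = (\<Inter>b\<in>B. {b \<otimes>\<^bsub>G\<^esub> a \<otimes>\<^bsub>G\<^esub> inv\<^bsub>G\<^esub> b | a. a \<in> A})"

inductive sigma_subnormal :: "('a, 'b) monoid_scheme \<Rightarrow> nat set set \<Rightarrow> 'a set \<Rightarrow> bool"
  for G Sig where
  top: "sigma_subnormal G Sig (carrier G)"
| step: "sigma_subnormal G Sig B \<Longrightarrow> subgroup A G \<Longrightarrow> A \<subseteq> B \<Longrightarrow>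
          normal A (G\<lparr>carrier := B\<rparr>) \<or>
          (\<exists>s\<in>Sig. \<forall>p. Factorial_Ring.prime (p::nat) \<longrightarrow> p dvd (card B div card (core_in G B A)) \<longrightarrow> p \<in> s)
          \<Longrightarrow> sigma_subnormal G Sig A"

definition induces_power_automorphisms :: "('a, 'b) monoid_scheme \<Rightarrow> 'a set \<Rightarrow> bool" where
  "induces_power_automorphisms G D \<longleftrightarrow>
     (\<forall>g\<in>carrier G. \<forall>H. subgroup H G \<and> H \<subseteq> D \<longrightarrow>
        {g \<otimes>\<^bsub>G\<^esub> h \<otimes>\<^bsub>G\<^esub> inv\<^bsub>G\<^esub> g | h. h \<in> H} = H)"

definition centralizes :: "('a, 'b) monoid_scheme \<Rightarrow> 'a set \<Rightarrow> 'a set \<Rightarrow> bool" where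
  "centralizes G D A \<longleftrightarrow> (\<forall>d\<in>D. \<forall>a\<in>A. d \<otimes>\<^bsub>G\<^esub> a = a \<otimes>\<^bsub>G\<^esub> d)"

end

theory Submission
  imports Defs
begin


definition pin :: "nat set \<Rightarrow> nat \<Rightarrow> bool" where
  "pin s k \<longleftrightarrow> (\<forall>p. Factorial_Ring.prime p \<longrightarrow> p dvd k \<longrightarrow> p \<in> s)"
definition pinc :: "nat set \<Rightarrow> nat \<Rightarrow> bool" where
  "pinc s k \<longleftrightarrow> (\<forall>p. Factorial_Ring.prime p \<longrightarrow> p dvd k \<longrightarrow> p \<notin> s)"

lemma pin_dvd: "pin s k \<Longrightarrow> j dvd k \<Longrightarrow> pin s j"
  unfolding pin_def using dvd_trans by blast
lemma pinc_dvd: "pinc s k \<Longrightarrow> j dvd k \<Longrightarrow> pinc s j"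
  unfolding pinc_def using dvd_trans by blast
lemma pin_pinc_one: "pin s k \<Longrightarrow> pinc s k \<Longrightarrow> k = 1"
  unfolding pin_def pinc_def using prime_factor_nat by blast
lemma pin_disj_one: "pin s k \<Longrightarrow> pin t k \<Longrightarrow> s \<inter> t = {} \<Longrightarrow> k = 1"
  unfolding pin_def using prime_factor_nat by blast
lemma pin_mult: "pin s a \<Longrightarrow> pin s b \<Longrightarrow> pin s (a*b)"
  unfolding pin_def by (metis prime_dvd_mult_iff)
lemma pinc_mult: "pinc s a \<Longrightarrow> pinc s b \<Longrightarrow> pinc s (a*b)"
  unfolding pinc_def by (metis prime_dvd_mult_iff)
lemma pin_pinc_coprime: "pin s a \<Longrightarrow> pinc s b \<Longrightarrow> coprime a b"
  unfolding pin_def pinc_def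
proof (rule coprimeI)
  fix c assume "\<forall>p. Factorial_Ring.prime p \<longrightarrow> p dvd a \<longrightarrow> p \<in> s" "\<forall>p. Factorial_Ring.prime p \<longrightarrow> p dvd b \<longrightarrow> p \<notin> s"
    "c dvd a" "c dvd b"
  note h = this
  show "is_unit c"
  proof (rule ccontr)
    assume "\<not> is_unit c" then have "c \<noteq> 1" by auto
    then obtain p where "Factorial_Ring.prime p" "p dvd c" using prime_factor_nat by blast
    then show False using h dvd_trans by meson
  qed
qed
lemma pin_one: "pin s 1" unfolding pin_def by auto
lemma pinc_one: "pinc s 1" unfolding pinc_def by auto

context group begin

lemma cancel_l1 [simp]: "x \<in> carrier G \<Longrightarrow> y \<in> carrier G \<Longrightarrow> x \<otimes> (inv x \<otimes> y) = y"
  by (simp add: m_assoc[symmetric])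
lemma cancel_l2 [simp]: "x \<in> carrier G \<Longrightarrow> y \<in> carrier G \<Longrightarrow> inv x \<otimes> (x \<otimes> y) = y"
  by (simp add: m_assoc[symmetric])

lemma card_sub_dvd:
  assumes "finite (carrier G)" "subgroup U G" "subgroup V G" "U \<subseteq> V"
  shows "card U dvd card V"
proof -
  interpret Y: group "G\<lparr>carrier := V\<rparr>" using assms(3) subgroup_imp_group by blast
  have "subgroup U (G\<lparr>carrier := V\<rparr>)" using subgroup_incl assms by blast
  from Y.lagrange[OF this] have "card (rcosets\<^bsub>G\<lparr>carrier := V\<rparr>\<^esub> U) * card U = card V"
    by (simp add: order_def)
  then show ?thesis by (metis dvd_triv_right)
qed

lemma prod_subgroup:
  assumes K: "subgroup K G" and N: "subgroup N G" and nm: "\<forall>k\<in>K. \<forall>x\<in>N. k \<otimes> x \<otimes> inv k \<in> N"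
  shows "subgroup (K <#> N) G"
proof (rule subgroupI)
  show "K <#> N \<subseteq> carrier G" using K N by (simp add: setmult_subset_G subgroup.subset)
  have "\<one> \<otimes> \<one> \<in> K <#> N" unfolding set_mult_def
    using subgroup.one_closed[OF K] subgroup.one_closed[OF N] by blast
  then show "K <#> N \<noteq> {}" by blast
next
  fix a assume "a \<in> K <#> N"
  then obtain k x where kx: "k \<in> K" "x \<in> N" "a = k \<otimes> x" unfolding set_mult_def by blast
  have c: "k \<in> carrier G" "x \<in> carrier G"
    using subgroup.mem_carrier[OF K kx(1)] subgroup.mem_carrier[OF N kx(2)] by auto
  have "inv a = inv k \<otimes> (k \<otimes> inv x \<otimes> inv k)"
    using c kx(3) by (simp add: inv_mult_group m_assoc)
  moreover have "inv k \<in> K" using subgroup.m_inv_closed[OF K kx(1)] .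
  moreover have "k \<otimes> inv x \<otimes> inv k \<in> N" using nm kx(1) subgroup.m_inv_closed[OF N kx(2)] by simp
  ultimately show "inv a \<in> K <#> N" unfolding set_mult_def by blast
next
  fix a b assume "a \<in> K <#> N" "b \<in> K <#> N"
  then obtain k x k' x' where kx: "k \<in> K" "x \<in> N" "a = k \<otimes> x" "k' \<in> K" "x' \<in> N" "b = k' \<otimes> x'"
    unfolding set_mult_def by blast
  have c: "k \<in> carrier G" "x \<in> carrier G" "k' \<in> carrier G" "x' \<in> carrier G"
    using subgroup.mem_carrier[OF K kx(1)] subgroup.mem_carrier[OF N kx(2)]
      subgroup.mem_carrier[OF K kx(4)] subgroup.mem_carrier[OF N kx(5)] by auto
  have "a \<otimes> b = (k \<otimes> k') \<otimes> ((inv k' \<otimes> x \<otimes> inv (inv k')) \<otimes> x')"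
    using c kx(3,6) by (simp add: m_assoc)
  moreover have "k \<otimes> k' \<in> K" using subgroup.m_closed[OF K kx(1,4)] .
  moreover have "inv k' \<otimes> x \<otimes> inv (inv k') \<in> N"
    using nm subgroup.m_inv_closed[OF K kx(4)] kx(2) by simp
  then have "(inv k' \<otimes> x \<otimes> inv (inv k')) \<otimes> x' \<in> N"
    using subgroup.m_closed[OF N _ kx(5)] by blast
  ultimately show "a \<otimes> b \<in> K <#> N" unfolding set_mult_def by blast
qed

end

context group begin

lemma fiber_card:
  assumes K: "subgroup K G" and N: "subgroup N G" and k0: "k0 \<in> K" and n0: "n0 \<in> N"
  shows "card {j \<in> K \<times> N. fst j \<otimes> snd j = k0 \<otimes> n0} = card (K \<inter> N)"
proof -
  have c0: "k0 \<in> carrier G" "n0 \<in> carrier G" using subgroup.mem_carrier[OF K k0] subgroup.mem_carrier[OF N n0] by auto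
  let ?f = "\<lambda>t. (k0 \<otimes> t, inv t \<otimes> n0)"
  have "{j \<in> K \<times> N. fst j \<otimes> snd j = k0 \<otimes> n0} = ?f ` (K \<inter> N)"
  proof
    show "?f ` (K \<inter> N) \<subseteq> {j \<in> K \<times> N. fst j \<otimes> snd j = k0 \<otimes> n0}"
    proof
      fix j assume "j \<in> ?f ` (K \<inter> N)"
      then obtain t where t: "t \<in> K" "t \<in> N" "j = ?f t" by blast
      have ct: "t \<in> carrier G" using subgroup.mem_carrier[OF K t(1)] .
      have "k0 \<otimes> t \<in> K" using subgroup.m_closed[OF K k0 t(1)] .
      moreover have "inv t \<otimes> n0 \<in> N" using subgroup.m_closed[OF N subgroup.m_inv_closed[OF N t(2)] n0] .
      moreover have "(k0 \<otimes> t) \<otimes> (inv t \<otimes> n0) = k0 \<otimes> n0"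
        using c0 ct by (simp add: m_assoc)
      ultimately show "j \<in> {j \<in> K \<times> N. fst j \<otimes> snd j = k0 \<otimes> n0}" using t by auto
    qed
  next
    show "{j \<in> K \<times> N. fst j \<otimes> snd j = k0 \<otimes> n0} \<subseteq> ?f ` (K \<inter> N)"
    proof
      fix j assume j: "j \<in> {j \<in> K \<times> N. fst j \<otimes> snd j = k0 \<otimes> n0}"
      obtain k n where kn: "j = (k, n)" "k \<in> K" "n \<in> N" "k \<otimes> n = k0 \<otimes> n0" using j by auto
      have c: "k \<in> carrier G" "n \<in> carrier G" using subgroup.mem_carrier[OF K kn(2)] subgroup.mem_carrier[OF N kn(3)] by auto
      define t where "t = inv k0 \<otimes> k"
      have tK: "t \<in> K" unfolding t_def using subgroup.m_closed[OF K subgroup.m_inv_closed[OF K k0] kn(2)] .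
      have ct: "t \<in> carrier G" using subgroup.mem_carrier[OF K tK] .
      have e1: "k = k0 \<otimes> t" unfolding t_def using c c0 by simp
      have "k0 \<otimes> (t \<otimes> n) = (k0 \<otimes> t) \<otimes> n" using c0 ct c by (simp only: m_assoc)
      also have "\<dots> = k0 \<otimes> n0" using e1 kn(4) by simp
      finally have "k0 \<otimes> (t \<otimes> n) = k0 \<otimes> n0" .
      hence e2: "t \<otimes> n = n0" by (rule l_cancel[OF _ m_closed[OF ct c(2)] c0(2) c0(1)])
      have e3: "t = n0 \<otimes> inv n" using iffD2[OF inv_solve_right'[OF ct c0(2) c(2)]] e2 by simp
      have tN: "t \<in> N" using e3 subgroup.m_closed[OF N n0 subgroup.m_inv_closed[OF N kn(3)]] by simp
      have "n = inv t \<otimes> n0" using iffD2[OF inv_solve_left'[OF c(2) ct c0(2)]] e2 by simp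
      then show "j \<in> ?f ` (K \<inter> N)" using kn e1 tK tN by blast
    qed
  qed
  moreover have "inj_on ?f (K \<inter> N)"
  proof (rule inj_onI)
    fix t t' assume "t \<in> K \<inter> N" "t' \<in> K \<inter> N" "?f t = ?f t'"
    then have "k0 \<otimes> t = k0 \<otimes> t'" by simp
    then show "t = t'" by (rule l_cancel[OF _ subgroup.mem_carrier[OF K] subgroup.mem_carrier[OF K] c0(1)]) (use \<open>t \<in> K \<inter> N\<close> \<open>t' \<in> K \<inter> N\<close> in auto)
  qed
  ultimately show ?thesis using card_image by metis
qed

lemma card_prod:
  assumes fin: "finite (carrier G)" and K: "subgroup K G" and N: "subgroup N G"
  shows "card (K <#> N) * card (K \<inter> N) = card K * card N"
proof -
  have fK: "finite K" "finite N" using finite_subset[OF subgroup.subset[OF K] fin] finite_subset[OF subgroup.subset[OF N] fin] by auto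
  have fS: "finite (K <#> N)" using finite_subset[OF setmult_subset_G[OF subgroup.subset[OF K] subgroup.subset[OF N]] fin] .
  have "sum (\<lambda>i. card {j\<in>K \<times> N. fst j \<otimes> snd j = i}) (K <#> N) = 1 * card (K \<times> N)"
  proof (rule sum_multicount)
    show "finite (K <#> N)" by fact
    show "finite (K \<times> N)" using fK by simp
    show "\<forall>j\<in>K \<times> N. card {i \<in> K <#> N. fst j \<otimes> snd j = i} = 1"
    proof
      fix j assume j: "j \<in> K \<times> N"
      have "fst j \<otimes> snd j \<in> K <#> N" using j unfolding set_mult_def by (auto simp: mem_Times_iff)
      then have "{i \<in> K <#> N. fst j \<otimes> snd j = i} = {fst j \<otimes> snd j}" by auto
      then show "card {i \<in> K <#> N. fst j \<otimes> snd j = i} = 1" by simp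
    qed
  qed
  moreover have "sum (\<lambda>i. card {j\<in>K \<times> N. fst j \<otimes> snd j = i}) (K <#> N) = sum (\<lambda>i. card (K \<inter> N)) (K <#> N)"
  proof (rule sum.cong)
    fix i assume "i \<in> K <#> N"
    then obtain k0 n0 where "k0 \<in> K" "n0 \<in> N" "i = k0 \<otimes> n0" unfolding set_mult_def by blast
    then show "card {j\<in>K \<times> N. fst j \<otimes> snd j = i} = card (K \<inter> N)" using fiber_card[OF K N] by simp
  qed (rule refl)
  ultimately have "sum (\<lambda>i. card (K \<inter> N)) (K <#> N) = card (K \<times> N)" by (metis mult_1)
  then show ?thesis unfolding sum_constant card_cartesian_product by simp
qed

end

context group begin

lemma conj_subgroup:
  assumes g: "g \<in> carrier G" and H: "subgroup H G"
  shows "subgroup {g \<otimes> h \<otimes> inv g | h. h \<in> H} G"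
proof (rule subgroupI)
  show "{g \<otimes> h \<otimes> inv g | h. h \<in> H} \<subseteq> carrier G"
    using g subgroup.mem_carrier[OF H] by auto
  have "g \<otimes> \<one> \<otimes> inv g \<in> {g \<otimes> h \<otimes> inv g | h. h \<in> H}" using subgroup.one_closed[OF H] by blast
  then show "{g \<otimes> h \<otimes> inv g | h. h \<in> H} \<noteq> {}" by blast
next
  fix a assume "a \<in> {g \<otimes> h \<otimes> inv g | h. h \<in> H}"
  then obtain h where h: "h \<in> H" "a = g \<otimes> h \<otimes> inv g" by blast
  have ch: "h \<in> carrier G" using subgroup.mem_carrier[OF H h(1)] .
  have "inv a = g \<otimes> inv h \<otimes> inv g" using h(2) g ch by (simp add: inv_mult_group m_assoc)
  then show "inv a \<in> {g \<otimes> h \<otimes> inv g | h. h \<in> H}" using subgroup.m_inv_closed[OF H h(1)] by blast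
next
  fix a b assume "a \<in> {g \<otimes> h \<otimes> inv g | h. h \<in> H}" "b \<in> {g \<otimes> h \<otimes> inv g | h. h \<in> H}"
  then obtain h h' where h: "h \<in> H" "a = g \<otimes> h \<otimes> inv g" "h' \<in> H" "b = g \<otimes> h' \<otimes> inv g" by blast
  have ch: "h \<in> carrier G" "h' \<in> carrier G" using subgroup.mem_carrier[OF H h(1)] subgroup.mem_carrier[OF H h(3)] by auto
  have "a \<otimes> b = g \<otimes> (h \<otimes> h') \<otimes> inv g" using h(2,4) g ch by (simp add: m_assoc)
  then show "a \<otimes> b \<in> {g \<otimes> h \<otimes> inv g | h. h \<in> H}" using subgroup.m_closed[OF H h(1,3)] by blast
qed

lemma conj_card:
  assumes g: "g \<in> carrier G" and H: "subgroup H G"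
  shows "card {g \<otimes> h \<otimes> inv g | h. h \<in> H} = card H"
proof -
  have e: "{g \<otimes> h \<otimes> inv g | h. h \<in> H} = (\<lambda>h. g \<otimes> h \<otimes> inv g) ` H" by blast
  have "inj_on (\<lambda>h. g \<otimes> h \<otimes> inv g) H"
  proof (rule inj_onI)
    fix x y assume xy: "x \<in> H" "y \<in> H" "g \<otimes> x \<otimes> inv g = g \<otimes> y \<otimes> inv g"
    have c: "x \<in> carrier G" "y \<in> carrier G" using subgroup.mem_carrier[OF H xy(1)] subgroup.mem_carrier[OF H xy(2)] by auto
    have "g \<otimes> x = g \<otimes> y" by (rule r_cancel[OF xy(3) m_closed[OF g c(1)] m_closed[OF g c(2)] inv_closed[OF g]])
    then show "x = y" by (rule l_cancel[OF _ c g])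
  qed
  then show ?thesis using e card_image by metis
qed

lemma core_sub:
  assumes "subgroup A G" "subgroup B G"
  shows "core_in G B A \<subseteq> A"
proof
  fix x assume "x \<in> core_in G B A"
  then have "x \<in> {\<one> \<otimes> a \<otimes> inv \<one> | a. a \<in> A}" unfolding core_in_def using subgroup.one_closed[OF assms(2)] by blast
  then show "x \<in> A" using subgroup.mem_carrier[OF assms(1)] by auto
qed

lemma core_subgroup:
  assumes "subgroup A G" "subgroup B G"
  shows "subgroup (core_in G B A) G"
  unfolding core_in_def
proof (rule subgroups_Inter)
  show "(\<lambda>b. {b \<otimes> a \<otimes> inv b |a. a \<in> A}) ` B \<noteq> {}" using subgroup.one_closed[OF assms(2)] by blast
  fix H assume "H \<in> (\<lambda>b. {b \<otimes> a \<otimes> inv b |a. a \<in> A}) ` B"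
  then obtain b where "b \<in> B" "H = {b \<otimes> a \<otimes> inv b |a. a \<in> A}" by blast
  then show "subgroup H G" using conj_subgroup[OF subgroup.mem_carrier[OF assms(2)] assms(1)] by blast
qed

lemma core_normal:
  assumes A: "subgroup A G" and B: "subgroup B G" and b: "b \<in> B" and c: "c \<in> core_in G B A"
  shows "b \<otimes> c \<otimes> inv b \<in> core_in G B A"
  unfolding core_in_def
proof (rule InterI)
  fix Y assume "Y \<in> (\<lambda>b. {b \<otimes> a \<otimes> inv b |a. a \<in> A}) ` B"
  then obtain b' where b': "b' \<in> B" "Y = {b' \<otimes> a \<otimes> inv b' |a. a \<in> A}" by blast
  have cb: "b \<in> carrier G" "b' \<in> carrier G" using subgroup.mem_carrier[OF B b] subgroup.mem_carrier[OF B b'(1)] by auto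
  have "inv b \<otimes> b' \<in> B" using subgroup.m_closed[OF B subgroup.m_inv_closed[OF B b] b'(1)] .
  then have "c \<in> {(inv b \<otimes> b') \<otimes> a \<otimes> inv (inv b \<otimes> b') |a. a \<in> A}" using c unfolding core_in_def by blast
  then obtain a where a: "a \<in> A" "c = (inv b \<otimes> b') \<otimes> a \<otimes> inv (inv b \<otimes> b')" by blast
  have ca: "a \<in> carrier G" using subgroup.mem_carrier[OF A a(1)] .
  have "b \<otimes> c \<otimes> inv b = b' \<otimes> a \<otimes> inv b'"
    unfolding a(2) using cb ca by (simp add: inv_mult_group m_assoc)
  then show "b \<otimes> c \<otimes> inv b \<in> Y" using b'(2) a(1) by blast
qed

end


definition hallp :: "('a, 'b) monoid_scheme \<Rightarrow> nat set \<Rightarrow> 'a set \<Rightarrow> 'a set \<Rightarrow> bool" where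
  "hallp G s K B \<longleftrightarrow> subgroup K G \<and> K \<subseteq> B \<and> pin s (card K) \<and> pinc s (card B div card K)"

context group begin

lemma sg_card_pos: "finite (carrier G) \<Longrightarrow> subgroup H G \<Longrightarrow> 0 < card H"
  using finite_subset[OF subgroup.subset] subgroup.one_closed card_gt_0_iff by blast

lemma sg_finite: "finite (carrier G) \<Longrightarrow> subgroup H G \<Longrightarrow> finite H"
  using finite_subset[OF subgroup.subset] by blast

lemma setmult_sub:
  assumes "subgroup B G" "K \<subseteq> B" "A \<subseteq> B" shows "K <#> A \<subseteq> B"
  unfolding set_mult_def using subgroup.m_closed[OF assms(1)] assms(2,3) by blast

lemma setmult_left: assumes "subgroup A G" "subgroup K G" shows "K \<subseteq> K <#> A"
proof
  fix k assume "k \<in> K"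
  then have "k = k \<otimes> \<one>" using subgroup.mem_carrier[OF assms(2)] by simp
  then show "k \<in> K <#> A" unfolding set_mult_def using \<open>k \<in> K\<close> subgroup.one_closed[OF assms(1)] by blast
qed

lemma setmult_right: assumes "subgroup A G" "subgroup K G" shows "A \<subseteq> K <#> A"
proof
  fix k assume "k \<in> A"
  then have "k = \<one> \<otimes> k" using subgroup.mem_carrier[OF assms(1)] by simp
  then show "k \<in> K <#> A" unfolding set_mult_def using \<open>k \<in> A\<close> subgroup.one_closed[OF assms(2)] by blast
qed

lemma dvd_div_eq: "(a::nat) = b * c \<Longrightarrow> 0 < b \<Longrightarrow> a div b = c" by simp

lemma L_normal:
  assumes fin: "finite (carrier G)" and h: "hallp G s K B" and B: "subgroup B G" and A: "subgroup A G"
    and AB: "A \<subseteq> B" and nA: "\<forall>b\<in>B. \<forall>a\<in>A. b \<otimes> a \<otimes> inv b \<in> A"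
  shows "pinc s (card A div card (K \<inter> A))"
proof -
  have K: "subgroup K G" "K \<subseteq> B" "pinc s (card B div card K)" using h unfolding hallp_def by auto
  have P: "subgroup (K <#> A) G" using prod_subgroup[OF K(1) A] nA K(2) by blast
  have PB: "K <#> A \<subseteq> B" using setmult_sub[OF B K(2) AB] .
  obtain j where j: "card B = card (K <#> A) * j" using card_sub_dvd[OF fin P B PB] by (auto elim: dvdE)
  obtain l where l: "card (K <#> A) = card K * l" using card_sub_dvd[OF fin K(1) P setmult_left[OF A K(1)]] by (auto elim: dvdE)
  have pK: "0 < card K" "0 < card (K \<inter> A)" using sg_card_pos[OF fin K(1)] sg_card_pos[OF fin subgroups_Inter_pair[OF K(1) A]] by auto
  have "card K * l * card (K \<inter> A) = card K * card A" using card_prod[OF fin K(1) A] l by simp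
  then have "card A = card (K \<inter> A) * l" using pK by (simp add: mult.assoc mult.commute)
  then have e1: "card A div card (K \<inter> A) = l" using pK by simp
  have "card B div card K = l * j" using j l pK by (simp add: mult.assoc)
  then have "pinc s (l * j)" using K(3) by simp
  then show ?thesis using e1 pinc_dvd by (metis dvd_triv_left)
qed

lemma L_core:
  assumes fin: "finite (carrier G)" and h: "hallp G s K B" and B: "subgroup B G" and A: "subgroup A G"
    and AB: "A \<subseteq> B" and C: "subgroup C G" "C \<subseteq> A" and nC: "\<forall>b\<in>B. \<forall>a\<in>C. b \<otimes> a \<otimes> inv b \<in> C"
    and pc: "pin s (card B div card C)"
  shows "pinc s (card A div card (K \<inter> A))"
proof -
  have K: "subgroup K G" "K \<subseteq> B" "pinc s (card B div card K)" using h unfolding hallp_def by auto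
  have P: "subgroup (K <#> C) G" using prod_subgroup[OF K(1) C(1)] nC K(2) by blast
  have PB: "K <#> C \<subseteq> B" using setmult_sub[OF B K(2)] C AB by blast
  obtain j where j: "card B = card (K <#> C) * j" using card_sub_dvd[OF fin P B PB] by (auto elim: dvdE)
  obtain l where l: "card (K <#> C) = card C * l" using card_sub_dvd[OF fin C(1) P setmult_right[OF C(1) K(1)]] by (auto elim: dvdE)
  obtain l' where l': "card (K <#> C) = card K * l'" using card_sub_dvd[OF fin K(1) P setmult_left[OF C(1) K(1)]] by (auto elim: dvdE)
  have pK: "0 < card K" "0 < card C" "0 < card (K \<inter> A)" using sg_card_pos[OF fin K(1)] sg_card_pos[OF fin C(1)] sg_card_pos[OF fin subgroups_Inter_pair[OF K(1) A]] by auto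
  have "card B div card C = l * j" using j l pK by (simp add: mult.assoc)
  then have pj: "pin s j" using pc pin_dvd by (metis dvd_triv_right)
  have "card B div card K = l' * j" using j l' pK by (simp add: mult.assoc)
  then have pj': "pinc s j" using K(3) pinc_dvd by (metis dvd_triv_right)
  have "j = 1" using pin_pinc_one[OF pj pj'] .
  then have "card (K <#> C) = card B" using j by simp
  then have PBe: "K <#> C = B" using card_subset_eq[OF sg_finite[OF fin B] PB] by simp
  have "K <#> C \<subseteq> K <#> A" unfolding set_mult_def using C(2) by blast
  then have KA: "K <#> A = B" using PBe setmult_sub[OF B K(2) AB] by blast
  obtain c where c: "card B = card K * c" using card_sub_dvd[OF fin K(1) B K(2)] by (auto elim: dvdE)
  have "card K * c * card (K \<inter> A) = card K * card A" using card_prod[OF fin K(1) A] KA c by simp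
  then have "card A = card (K \<inter> A) * c" using pK by (simp add: mult.assoc mult.commute)
  then have "card A div card (K \<inter> A) = c" using pK by simp
  moreover have "card B div card K = c" using c pK by simp
  ultimately show ?thesis using K(3) by simp
qed

lemma L_other:
  assumes fin: "finite (carrier G)" and h: "hallp G s K B" and B: "subgroup B G" and A: "subgroup A G"
    and AB: "A \<subseteq> B" and C: "subgroup C G" "C \<subseteq> A" and nC: "\<forall>b\<in>B. \<forall>a\<in>C. b \<otimes> a \<otimes> inv b \<in> C"
    and pc: "pin t (card B div card C)" and st: "s \<inter> t = {}"
  shows "pinc s (card A div card (K \<inter> A))"
proof -
  have K: "subgroup K G" "K \<subseteq> B" "pin s (card K)" "pinc s (card B div card K)" using h unfolding hallp_def by auto
  have P: "subgroup (K <#> C) G" using prod_subgroup[OF K(1) C(1)] nC K(2) by blast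
  have PB: "K <#> C \<subseteq> B" using setmult_sub[OF B K(2)] C AB by blast
  obtain j where j: "card B = card (K <#> C) * j" using card_sub_dvd[OF fin P B PB] by (auto elim: dvdE)
  obtain l where l: "card (K <#> C) = card C * l" using card_sub_dvd[OF fin C(1) P setmult_right[OF C(1) K(1)]] by (auto elim: dvdE)
  have pK: "0 < card K" "0 < card C" "0 < card (K \<inter> C)" using sg_card_pos[OF fin K(1)] sg_card_pos[OF fin C(1)] sg_card_pos[OF fin subgroups_Inter_pair[OF K(1) C(1)]] by auto
  have "card C * l * card (K \<inter> C) = card K * card C" using card_prod[OF fin K(1) C(1)] l by simp
  then have "card K = l * card (K \<inter> C)" using pK by (simp add: mult.assoc mult.commute)
  then have p1: "pin s l" using K(3) pin_dvd by (metis dvd_triv_left)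
  have "card B div card C = l * j" using j l pK by (simp add: mult.assoc)
  then have p2: "pin t l" using pc pin_dvd by (metis dvd_triv_left)
  have "l = 1" using pin_disj_one[OF p1 p2 st] .
  then have "card (K <#> C) = card C" using l by simp
  then have "K <#> C = C" using card_subset_eq[OF sg_finite[OF fin P] setmult_right[OF C(1) K(1)]] by simp
  then have KA: "K \<subseteq> A" using setmult_left[OF C(1) K(1)] C(2) by blast
  then have e: "K \<inter> A = K" by blast
  obtain i where i: "card B = card A * i" using card_sub_dvd[OF fin A B AB] by (auto elim: dvdE)
  obtain m where m: "card A = card K * m" using card_sub_dvd[OF fin K(1) A KA] by (auto elim: dvdE)
  have "card B div card K = m * i" using i m pK by (simp add: mult.assoc)
  then have "pinc s m" using K(4) pinc_dvd by (metis dvd_triv_left)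
  moreover have "card A div card (K \<inter> A) = m" using e m pK by simp
  ultimately show ?thesis by simp
qed

end

context group begin

lemma normal_conj:
  assumes n: "normal A (G\<lparr>carrier := B\<rparr>)" and B: "subgroup B G" and b: "b \<in> B" and a: "a \<in> A"
  shows "b \<otimes> a \<otimes> inv b \<in> A"
proof -
  have "b \<otimes>\<^bsub>G\<lparr>carrier := B\<rparr>\<^esub> a \<otimes>\<^bsub>G\<lparr>carrier := B\<rparr>\<^esub> inv\<^bsub>G\<lparr>carrier := B\<rparr>\<^esub> b \<in> A"
    using normal.inv_op_closed2[OF n, of b a] b a by simp
  then show ?thesis using m_inv_consistent[OF B b] by simp
qed

lemma hall_induct:
  assumes fin: "finite (carrier G)" and part: "sigma_partition Sig" and sS: "s \<in> Sig"
  shows "sigma_subnormal G Sig Z \<Longrightarrow> subgroup Z G \<and> (\<forall>H. hall_pi_subgroup G s H \<longrightarrow> pinc s (card Z div card (H \<inter> Z)))"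
proof (induction rule: sigma_subnormal.induct)
  case top
  show ?case
  proof (intro conjI allI impI)
    show "subgroup (carrier G) G" by (rule subgroup_self)
    fix H assume "hall_pi_subgroup G s H"
    then show "pinc s (card (carrier G) div card (H \<inter> carrier G))"
      unfolding hall_pi_subgroup_def pinc_def using subgroup.subset by (metis Int_absorb2)
  qed
next
  case (step B A)
  have B: "subgroup B G" using step.IH by blast
  show ?case
  proof (intro conjI allI impI)
    show "subgroup A G" by fact
    fix H assume hH: "hall_pi_subgroup G s H"
    have H: "subgroup H G" "pin s (card H)" using hH unfolding hall_pi_subgroup_def pi_set_def pin_def by auto
    have KG: "subgroup (H \<inter> B) G" using subgroups_Inter_pair[OF H(1) B] .
    have "pin s (card (H \<inter> B))" using H(2) pin_dvd card_sub_dvd[OF fin KG H(1)] by blast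
    then have hp: "hallp G s (H \<inter> B) B" unfolding hallp_def using KG step.IH hH by blast
    have eHA: "H \<inter> A = (H \<inter> B) \<inter> A" using step.hyps(3) by blast
    have C: "subgroup (core_in G B A) G" "core_in G B A \<subseteq> A" "\<forall>b\<in>B. \<forall>a\<in>core_in G B A. b \<otimes> a \<otimes> inv b \<in> core_in G B A"
      using core_subgroup[OF step.hyps(2) B] core_sub[OF step.hyps(2) B] core_normal[OF step.hyps(2) B] by auto
    from step.hyps(4) show "pinc s (card A div card (H \<inter> A))"
    proof
      assume "normal A (G\<lparr>carrier := B\<rparr>)"
      then have "\<forall>b\<in>B. \<forall>a\<in>A. b \<otimes> a \<otimes> inv b \<in> A" using normal_conj[OF _ B] by blast
      then show ?thesis using L_normal[OF fin hp B step.hyps(2,3)] eHA by simp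
    next
      assume "\<exists>t\<in>Sig. \<forall>p. Factorial_Ring.prime p \<longrightarrow> p dvd (card B div card (core_in G B A)) \<longrightarrow> p \<in> t"
      then obtain t where t: "t \<in> Sig" "pin t (card B div card (core_in G B A))" unfolding pin_def by blast
      show ?thesis
      proof (cases "t = s")
        case True
        then show ?thesis using L_core[OF fin hp B step.hyps(2,3) C] t eHA by simp
      next
        case False
        then have "s \<inter> t = {}" using part sS t(1) unfolding sigma_partition_def by blast
        then show ?thesis using L_other[OF fin hp B step.hyps(2,3) C t(2)] eHA by simp
      qed
    qed
  qed
qed

lemma sub_in_all_halls:
  assumes fin: "finite (carrier G)" and part: "sigma_partition Sig" and sS: "s \<in> Sig"
    and sn: "sigma_subnormal G Sig A" and pA: "pi_set s A" and hH: "hall_pi_subgroup G s H"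
  shows "A \<subseteq> H"
proof -
  have A: "subgroup A G" and pc: "pinc s (card A div card (H \<inter> A))" using hall_induct[OF fin part sS sn] hH by auto
  have H: "subgroup H G" using hH unfolding hall_pi_subgroup_def by auto
  have HA: "subgroup (H \<inter> A) G" using subgroups_Inter_pair[OF H A] .
  obtain m where m: "card A = card (H \<inter> A) * m" using card_sub_dvd[OF fin HA A] by (auto elim: dvdE)
  have p0: "0 < card (H \<inter> A)" using sg_card_pos[OF fin HA] .
  have "card A div card (H \<inter> A) = m" using m p0 by simp
  moreover have "pin s m" using pA m unfolding pi_set_def pin_def by (metis dvd_mult dvd_trans dvd_refl)
  ultimately have "m = 1" using pc pin_pinc_one by simp
  then have "card (H \<inter> A) = card A" using m by simp
  then have "H \<inter> A = A" using card_subset_eq[OF sg_finite[OF fin A]] by blast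
  then show ?thesis by blast
qed

end

context group begin

lemma sub_of_sub: "subgroup D G \<Longrightarrow> subgroup K (G\<lparr>carrier := D\<rparr>) \<Longrightarrow> subgroup K G \<and> K \<subseteq> D"
  using incl_subgroup subgroup.subset by fastforce

lemma comm_normal:
  assumes D: "subgroup D G" and cD: "comm_group (G\<lparr>carrier := D\<rparr>)" and K: "subgroup K G" "K \<subseteq> D"
  shows "normal K (G\<lparr>carrier := D\<rparr>)"
  using comm_group.subgroup_imp_normal[OF cD] subgroup_incl[OF K(1) D K(2)] by blast

lemma comm_D:
  assumes cD: "comm_group (G\<lparr>carrier := D\<rparr>)" and "x \<in> D" "y \<in> D"
  shows "x \<otimes> y = y \<otimes> x"
  using comm_monoid.m_comm[OF comm_group.axioms(1)[OF cD], of x y] assms by simp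

lemma O_exists:
  assumes fin: "finite (carrier G)" and D: "subgroup D G" and cD: "comm_group (G\<lparr>carrier := D\<rparr>)"
  shows "\<exists>Op. is_O_pi G s D Op"
proof -
  define F where "F = {K. normal K (G\<lparr>carrier := D\<rparr>) \<and> pi_set s K}"
  have FD: "F \<subseteq> Pow D" unfolding F_def using sub_of_sub[OF D] normal_imp_subgroup by blast
  have finD: "finite D" using sg_finite[OF fin D] .
  have fF: "finite F" using finite_subset[OF FD] finD by blast
  have one: "subgroup {\<one>} G" "{\<one>} \<subseteq> D" using triv_subgroup subgroup.one_closed[OF D] by auto
  have "{\<one>} \<in> F" unfolding F_def pi_set_def using comm_normal[OF D cD one] by auto
  then have neF: "F \<noteq> {}" by blast
  define m where "m = Max (card ` F)"
  have "m \<in> card ` F" unfolding m_def using fF neF by simp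
  then obtain Op where Op: "Op \<in> F" "card Op = m" by blast
  have mx: "\<And>K. K \<in> F \<Longrightarrow> card K \<le> card Op" unfolding Op(2) m_def using fF by simp
  have OpG: "subgroup Op G" "Op \<subseteq> D" using Op(1) sub_of_sub[OF D] normal_imp_subgroup unfolding F_def by blast+
  have "is_O_pi G s D Op" unfolding is_O_pi_def
  proof (intro conjI allI impI)
    show "Op \<lhd> G\<lparr>carrier := D\<rparr>" "pi_set s Op" using Op(1) unfolding F_def by auto
    fix K assume KF: "K \<lhd> G\<lparr>carrier := D\<rparr> \<and> pi_set s K"
    then have KF': "K \<in> F" unfolding F_def by blast
    have KG: "subgroup K G" "K \<subseteq> D" using KF sub_of_sub[OF D] normal_imp_subgroup by blast+
    have nm: "\<forall>k\<in>K. \<forall>x\<in>Op. k \<otimes> x \<otimes> inv k \<in> Op"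
    proof (intro ballI)
      fix k x assume kx: "k \<in> K" "x \<in> Op"
      have c: "k \<in> carrier G" "x \<in> carrier G" using subgroup.mem_carrier[OF KG(1) kx(1)] subgroup.mem_carrier[OF OpG(1) kx(2)] by auto
      have "k \<otimes> x = x \<otimes> k" using comm_D[OF cD] kx KG(2) OpG(2) by blast
      then have "k \<otimes> x \<otimes> inv k = x" using c by (simp add: m_assoc)
      then show "k \<otimes> x \<otimes> inv k \<in> Op" using kx by simp
    qed
    have P: "subgroup (K <#> Op) G" using prod_subgroup[OF KG(1) OpG(1) nm] .
    have PD: "K <#> Op \<subseteq> D" using setmult_sub[OF D KG(2) OpG(2)] .
    have cp: "card (K <#> Op) * card (K \<inter> Op) = card K * card Op" using card_prod[OF fin KG(1) OpG(1)] .
    have "pin s (card K * card Op)" using pin_mult KF Op(1) unfolding F_def pi_set_def pin_def by blast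
    then have "pin s (card (K <#> Op))" using cp pin_dvd by (metis dvd_triv_left)
    then have "K <#> Op \<in> F" unfolding F_def pi_set_def pin_def using comm_normal[OF D cD P PD] by blast
    then have "card (K <#> Op) \<le> card Op" using mx by blast
    then have "Op = K <#> Op" using card_seteq[OF sg_finite[OF fin P] setmult_right[OF OpG(1) KG(1)]] by blast
    then show "K \<subseteq> Op" using setmult_left[OF OpG(1) KG(1)] by blast
  qed
  then show ?thesis by blast
qed

end


lemma split_pi:
  assumes n: "0 < (n::nat)"
  shows "\<exists>m1 m2. n = m1 * m2 \<and> pin s m1 \<and> pinc s m2"
proof -
  let ?P = "\<lambda>k. k dvd n \<and> pin s k"
  have P1: "?P 1" using pin_one by simp
  have bnd: "\<And>y. ?P y \<Longrightarrow> y \<le> n" using n dvd_imp_le by blast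
  define m1 where "m1 = (GREATEST k. ?P k)"
  have Pm: "?P m1" unfolding m1_def using GreatestI_nat[of ?P 1 n] P1 bnd by blast
  have mx: "\<And>y. ?P y \<Longrightarrow> y \<le> m1" unfolding m1_def using Greatest_le_nat[of ?P _ n] bnd by blast
  obtain m2 where m2: "n = m1 * m2" using Pm by (auto elim: dvdE)
  have m1p: "0 < m1" using m2 n by (cases "m1 = 0") auto
  have "pinc s m2" unfolding pinc_def
  proof (intro allI impI notI)
    fix p assume p: "Factorial_Ring.prime p" "p dvd m2" "p \<in> s"
    have "pin s p" unfolding pin_def using p by (metis primes_dvd_imp_eq)
    then have "pin s (m1 * p)" using Pm pin_mult by blast
    moreover have "m1 * p dvd n" using m2 p(2) by simp
    ultimately have "m1 * p \<le> m1" using mx by blast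
    moreover have "1 < p" using p(1) prime_gt_1_nat by blast
    ultimately show False using m1p by simp
  qed
  then show ?thesis using m2 Pm by blast
qed

context group begin

lemma comm_pow:
  assumes a: "a \<in> carrier G" and z: "z \<in> carrier G" and e: "a \<otimes> z = z \<otimes> a"
  shows "a \<otimes> z [^] (k::nat) = z [^] k \<otimes> a"
proof (induction k)
  case 0 then show ?case using a by simp
next
  case (Suc k)
  have "a \<otimes> z [^] Suc k = (a \<otimes> z [^] k) \<otimes> z" using a z by (simp add: m_assoc)
  also have "\<dots> = z [^] k \<otimes> (a \<otimes> z)" using Suc a z by (simp add: m_assoc)
  also have "\<dots> = z [^] Suc k \<otimes> a" using e a z by (simp add: m_assoc)
  finally show ?case .
qed

lemma comm_inv:
  assumes a: "a \<in> carrier G" and z: "z \<in> carrier G" and e: "a \<otimes> z = z \<otimes> a"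
  shows "a \<otimes> inv z = inv z \<otimes> a"
proof -
  have "inv z \<otimes> (z \<otimes> a) \<otimes> inv z = inv z \<otimes> (a \<otimes> z) \<otimes> inv z" using e by simp
  then show ?thesis using a z by (simp add: m_assoc)
qed

lemma comm_mult:
  assumes a: "a \<in> carrier G" and u: "u \<in> carrier G" and w: "w \<in> carrier G"
    and e1: "a \<otimes> u = u \<otimes> a" and e2: "a \<otimes> w = w \<otimes> a"
  shows "a \<otimes> (u \<otimes> w) = (u \<otimes> w) \<otimes> a"
proof -
  have "a \<otimes> (u \<otimes> w) = (a \<otimes> u) \<otimes> w" using a u w by (simp add: m_assoc)
  also have "\<dots> = u \<otimes> (a \<otimes> w)" using e1 a u w by (simp add: m_assoc)
  also have "\<dots> = (u \<otimes> w) \<otimes> a" using e2 a u w by (simp add: m_assoc)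
  finally show ?thesis .
qed

end

context group begin

lemma sub_pow_closed: "subgroup K G \<Longrightarrow> x \<in> K \<Longrightarrow> x [^] (k::nat) \<in> K"
proof (induction k)
  case 0 then show ?case using subgroup.one_closed by simp
next
  case (Suc k) then show ?case using subgroup.m_closed[OF Suc(2)] by simp
qed

lemma pow_card_sub:
  assumes K: "subgroup K G" and x: "x \<in> K"
  shows "x [^] card K = \<one>"
proof -
  interpret Kg: group "G\<lparr>carrier := K\<rparr>" using subgroup_imp_group[OF K] .
  have "x [^]\<^bsub>G\<lparr>carrier := K\<rparr>\<^esub> order (G\<lparr>carrier := K\<rparr>) = \<one>\<^bsub>G\<lparr>carrier := K\<rparr>\<^esub>"
    using Kg.pow_order_eq_1[of x] x by simp
  then show ?thesis using nat_pow_consistent[of x "card K" K] by (simp add: order_def)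
qed

lemma conj_pow:
  assumes a: "a \<in> carrier G" and y: "y \<in> carrier G"
  shows "(a \<otimes> y \<otimes> inv a) [^] (k::nat) = a \<otimes> (y [^] k) \<otimes> inv a"
proof (induction k)
  case 0 then show ?case using a by simp
next
  case (Suc k) then show ?case using a y by (simp add: m_assoc)
qed

lemma comm_pow_distrib:
  assumes cD: "comm_group (G\<lparr>carrier := D\<rparr>)" and u: "u \<in> D" and v: "v \<in> D"
  shows "(u \<otimes> v) [^] (m::nat) = u [^] m \<otimes> v [^] m"
proof -
  have "(u \<otimes>\<^bsub>G\<lparr>carrier := D\<rparr>\<^esub> v) [^]\<^bsub>G\<lparr>carrier := D\<rparr>\<^esub> m =
        u [^]\<^bsub>G\<lparr>carrier := D\<rparr>\<^esub> m \<otimes>\<^bsub>G\<lparr>carrier := D\<rparr>\<^esub> v [^]\<^bsub>G\<lparr>carrier := D\<rparr>\<^esub> m"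
    using comm_monoid.nat_pow_distrib[OF comm_group.axioms(1)[OF cD], of u v m] u v by simp
  then show ?thesis using nat_pow_consistent[of _ m D] by simp
qed

end

theorem lemma2p7:
  fixes G (structure) and Sig :: "nat set set" and D M A :: "'a set"
  assumes "group G" and "finite (carrier G)" and "solvable G"
    and "sigma_partition Sig"
    \<comment> \<open>G = D \<rtimes> M\<close>
    and "D \<lhd> G" and "subgroup M G" and "D \<inter> M = {\<one>}" and "D <#> M = carrier G"
    \<comment> \<open>(i)\<close>
    and "hall_subgroup G D" and "comm_group (G\<lparr>carrier := D\<rparr>)" and "odd (card D)"
    and "sigma_nilpotent G Sig M" and "modular_subgroup_lattice G M"
    \<comment> \<open>(ii)\<close>
    and "induces_power_automorphisms G D"
    \<comment> \<open>(iii)\<close>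
    and "\<forall>s\<in>Sig. \<forall>Op. is_O_pi G s D Op \<longrightarrow>
           (\<exists>H N. hall_pi_subgroup G s H \<and> N \<lhd> G\<lparr>carrier := H\<rparr> \<and>
                  N \<inter> Op = {\<one>} \<and> N <#> Op = H)"
    and "sigma_primary Sig A" and "sigma_subnormal G Sig A" and "subgroup A G" and "A \<subseteq> M"
  shows "centralizes G D A"
proof -
  interpret group G by fact
  have fin: "finite (carrier G)" by fact
  have DG: "subgroup D G" using assms(5) normal_imp_subgroup by blast
  have cD: "comm_group (G\<lparr>carrier := D\<rparr>)" by fact
  have AG: "subgroup A G" by fact
  obtain s where s: "s \<in> Sig" "pi_set s A" using assms(16) unfolding sigma_primary_def by blast
  obtain Op where Op: "is_O_pi G s D Op" using O_exists[OF fin DG cD] by blast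
  obtain H N where HN: "hall_pi_subgroup G s H" "N \<lhd> G\<lparr>carrier := H\<rparr>" "N \<inter> Op = {\<one>}" "N <#> Op = H"
    using assms(15) s(1) Op by blast
  have allH: "\<And>H'. hall_pi_subgroup G s H' \<Longrightarrow> A \<subseteq> H'"
    using sub_in_all_halls[OF fin assms(4) s(1) assms(17) s(2)] by blast
  have AH: "A \<subseteq> H" using allH[OF HN(1)] .
  have HG: "subgroup H G" using HN(1) unfolding hall_pi_subgroup_def by blast
  have NG: "subgroup N G" "N \<subseteq> H" using sub_of_sub[OF HG] normal_imp_subgroup[OF HN(2)] by blast+
  have OpG: "subgroup Op G" "Op \<subseteq> D" using Op sub_of_sub[OF DG] normal_imp_subgroup unfolding is_O_pi_def by blast+
  have pa: "\<And>g K k. g \<in> carrier G \<Longrightarrow> subgroup K G \<Longrightarrow> K \<subseteq> D \<Longrightarrow> k \<in> K \<Longrightarrow> g \<otimes> k \<otimes> inv g \<in> K"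
  proof -
    fix g K k assume h: "g \<in> carrier G" "subgroup K G" "K \<subseteq> D" "k \<in> K"
    have "{g \<otimes> h \<otimes> inv g | h. h \<in> K} = K" using assms(14) h(1-3) unfolding induces_power_automorphisms_def by blast
    then show "g \<otimes> k \<otimes> inv g \<in> K" using h(4) by blast
  qed
  have cOp: "\<And>a w. a \<in> A \<Longrightarrow> w \<in> Op \<Longrightarrow> w \<otimes> a = a \<otimes> w"
  proof -
    fix a w assume aw: "a \<in> A" "w \<in> Op"
    have "a \<in> N <#> Op" using AH HN(4) aw by blast
    then obtain n w' where n: "n \<in> N" "w' \<in> Op" "a = n \<otimes> w'" unfolding set_mult_def by blast
    have cn: "n \<in> carrier G" "w \<in> carrier G" "w' \<in> carrier G"
      using subgroup.mem_carrier[OF NG(1) n(1)] subgroup.mem_carrier[OF OpG(1) aw(2)] subgroup.mem_carrier[OF OpG(1) n(2)] by auto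
    have wH: "w \<in> H" using setmult_right[OF OpG(1) NG(1)] HN(4) aw(2) by blast
    have c1: "n \<otimes> w \<otimes> inv n \<in> Op" using pa[OF cn(1) OpG aw(2)] .
    have c1': "n \<otimes> w \<otimes> inv n \<otimes> inv w \<in> Op" using subgroup.m_closed[OF OpG(1) c1 subgroup.m_inv_closed[OF OpG(1) aw(2)]] .
    have c2: "w \<otimes> inv n \<otimes> inv w \<in> N" using normal_conj[OF HN(2) HG wH subgroup.m_inv_closed[OF NG(1) n(1)]] .
    have "n \<otimes> (w \<otimes> inv n \<otimes> inv w) \<in> N" using subgroup.m_closed[OF NG(1) n(1) c2] .
    moreover have "n \<otimes> (w \<otimes> inv n \<otimes> inv w) = n \<otimes> w \<otimes> inv n \<otimes> inv w" using cn by (simp add: m_assoc)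
    ultimately have "n \<otimes> w \<otimes> inv n \<otimes> inv w \<in> N \<inter> Op" using c1' by simp
    then have "n \<otimes> w \<otimes> inv n \<otimes> inv w = \<one>" using HN(3) by blast
    then have "n \<otimes> w \<otimes> inv n = \<one> \<otimes> w" using inv_solve_right'[of \<one> "n \<otimes> w \<otimes> inv n" w] cn by simp
    then have "n \<otimes> w \<otimes> inv n = w" using cn by simp
    then have e1: "w \<otimes> n = n \<otimes> w" using inv_solve_right'[of w "n \<otimes> w" n] cn by simp
    have e2: "w \<otimes> w' = w' \<otimes> w" using comm_D[OF cD] OpG(2) n(2) aw(2) by blast
    show "w \<otimes> a = a \<otimes> w" using comm_mult[OF cn(2) cn(1) cn(3) e1 e2] n(3) by simp
  qed
  show ?thesis unfolding centralizes_def
  proof (intro ballI)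
    fix d a assume d: "d \<in> D" and a: "a \<in> A"
    have cd: "d \<in> carrier G" using subgroup.mem_carrier[OF DG d] .
    have ca: "a \<in> carrier G" using subgroup.mem_carrier[OF AG a] .
    have n0: "0 < card D" using sg_card_pos[OF fin DG] .
    obtain m1 m2 where m: "card D = m1 * m2" "pin s m1" "pinc s m2" using split_pi[OF n0] by blast
    have dn: "d [^] card D = \<one>" using pow_card_sub[OF DG d] .
    define x where "x = d [^] m2"
    define y where "y = d [^] m1"
    have cx: "x \<in> carrier G" "x \<in> D" unfolding x_def using cd sub_pow_closed[OF DG d] by auto
    have cy: "y \<in> carrier G" "y \<in> D" unfolding y_def using cd sub_pow_closed[OF DG d] by auto
    have "x [^] m1 = \<one>" unfolding x_def using nat_pow_pow[OF cd, of m2 m1] dn m(1) by (simp add: mult.commute)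
    then have ox: "ord x dvd m1" using pow_eq_id[OF cx(1)] by simp
    have KG: "subgroup (generate G {x}) G" using generate_is_subgroup cx(1) by simp
    have KD: "generate G {x} \<subseteq> D" using generate_subgroup_incl[OF _ DG] cx(2) by simp
    have "card (generate G {x}) = ord x" using generate_pow_card[OF cx(1)] by simp
    then have "pi_set s (generate G {x})" unfolding pi_set_def using pin_dvd[OF m(2) ox] unfolding pin_def by simp
    moreover have "normal (generate G {x}) (G\<lparr>carrier := D\<rparr>)" using comm_normal[OF DG cD KG KD] .
    ultimately have "generate G {x} \<subseteq> Op" using Op unfolding is_O_pi_def by blast
    then have xOp: "x \<in> Op" using generate.incl[of x "{x}" G] by blast
    have hx: "a \<otimes> x = x \<otimes> a" using cOp[OF a xOp] by simp
    define H' where "H' = {y \<otimes> h \<otimes> inv y | h. h \<in> H}"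
    have H'G: "subgroup H' G" unfolding H'_def using conj_subgroup[OF cy(1) HG] .
    have cH': "card H' = card H" unfolding H'_def using conj_card[OF cy(1) HG] .
    have hH': "hall_pi_subgroup G s H'" using HN(1) H'G cH' unfolding hall_pi_subgroup_def pi_set_def by simp
    have AH': "A \<subseteq> H'" using allH[OF hH'] .
    have "inv a \<in> H" using AH subgroup.m_inv_closed[OF AG a] by blast
    then have "y \<otimes> inv a \<otimes> inv y \<in> H'" unfolding H'_def by blast
    then have cH: "a \<otimes> (y \<otimes> inv a \<otimes> inv y) \<in> H'" using subgroup.m_closed[OF H'G] AH' a by blast
    define c where "c = a \<otimes> (y \<otimes> inv a \<otimes> inv y)"
    have cc: "c \<in> carrier G" using subgroup.mem_carrier[OF H'G] cH unfolding c_def by blast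
    have c1: "c [^] card H' = \<one>" using pow_card_sub[OF H'G] cH unfolding c_def by blast
    have ayD: "a \<otimes> y \<otimes> inv a \<in> D" using pa[OF ca DG _ cy(2)] by simp
    have iyD: "inv y \<in> D" using subgroup.m_inv_closed[OF DG cy(2)] .
    have ce: "c = (a \<otimes> y \<otimes> inv a) \<otimes> inv y" unfolding c_def using ca cy by (simp add: m_assoc)
    have ym: "y [^] m2 = \<one>" unfolding y_def using nat_pow_pow[OF cd, of m1 m2] dn m(1) by simp
    have "c [^] m2 = (a \<otimes> y \<otimes> inv a) [^] m2 \<otimes> (inv y) [^] m2"
      unfolding ce using comm_pow_distrib[OF cD ayD iyD] .
    also have "\<dots> = \<one>" using conj_pow[OF ca cy(1), of m2] ym nat_pow_inv[OF cy(1), of m2] ca by simp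
    finally have c2: "c [^] m2 = \<one>" .
    have "ord c dvd card H'" "ord c dvd m2" using pow_eq_id[OF cc] c1 c2 by auto
    moreover have "pin s (card H')" using hH' unfolding hall_pi_subgroup_def pi_set_def pin_def by blast
    ultimately have "ord c = 1" using pin_pinc_coprime[OF _ m(3)] coprime_common_divisor_nat by blast
    then have "c = \<one>" using ord_eq_1[OF cc] by simp
    then have "(a \<otimes> y \<otimes> inv a) \<otimes> inv y = \<one>" using ce by simp
    then have "a \<otimes> y \<otimes> inv a = \<one> \<otimes> y" using inv_solve_right'[of \<one> "a \<otimes> y \<otimes> inv a" y] ca cy by simp
    then have "a \<otimes> y \<otimes> inv a = y" using cy by simp
    then have hy: "a \<otimes> y = y \<otimes> a" using inv_solve_right'[of y "a \<otimes> y" a] ca cy by simp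
    have m1p: "m1 \<noteq> 0" using n0 m(1) by auto
    have cop: "coprime m1 m2" using pin_pinc_coprime[OF m(2,3)] .
    obtain u v where uv: "m1 * u = m2 * v + gcd m1 m2" using bezout_nat[OF m1p] by blast
    then have uv': "m1 * u = Suc (m2 * v)" using cop by simp
    have "y [^] u = d [^] (m1 * u)" unfolding y_def using nat_pow_pow[OF cd] by simp
    also have "\<dots> = x [^] v \<otimes> d" unfolding uv' x_def using nat_pow_pow[OF cd] by simp
    finally have "y [^] u = x [^] v \<otimes> d" .
    then have de: "d = inv (x [^] v) \<otimes> y [^] u" using inv_solve_left'[of d "x [^] v" "y [^] u"] cd cx cy by simp
    have h1: "a \<otimes> inv (x [^] v) = inv (x [^] v) \<otimes> a" using comm_inv[OF ca _ comm_pow[OF ca cx(1) hx]] cx by simp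
    have h2: "a \<otimes> y [^] u = y [^] u \<otimes> a" using comm_pow[OF ca cy(1) hy] .
    have "a \<otimes> d = d \<otimes> a" unfolding de using comm_mult[OF ca _ _ h1 h2] cx cy by simp
    then show "d \<otimes> a = a \<otimes> d" by simp
  qed
qed


end
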